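(* Let $q>0$, $k>0$, $D>0$, and let $\bar U=(\bar u,\bar z,\bar y):\mathbb{R}\to\mathbb{R}^3$ be a $C^1$ solution of the traveling-wave system \[ u'=\Big(\tfrac12 u^2-\tfrac12 u_-^2\Big)-(u-u_-)-q(z+Dy),\qquad z'=y,\qquad y'=D^{-1}\big(-y+k\varphi(u)z\big), \] (where $'=\mathrm{d}/\mathrm{d}\xi$) satisfying $\bar z(\xi)\ge 0$ for all $\xi$ and \[ \lim_{\xi\to-\infty}\bar U(\xi)=(u_-,0,0),\qquad \lim_{\xi\to+\infty}\bar U(\xi)=(u_+,1,0), \] where $u_\pm$ satisfy the Rankine–Hugoniot relation $\tfrac12(u_+^2-u_-^2)=u_+-u_-+q$, $u_+<u_{\mathrm{ig}}<u_-$, and the weak-detonation condition $u_+,u_-<1$. Then $\bar u(\xi)\le u_-$ for all $\xi\in\mathbb{R}$, and $\bar u$ is a decreasing (non-increasing) function of $\xi$ on $\mathbb{R}$.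
   Context: This is the rescaled Majda model $u_t-u_x+(u^2/2)_x=u_{xx}+qk\varphi(u)z$, $z_t-z_x=Dz_{xx}-k\varphi(u)z$ (wave speed normalized to $s=1$, viscosity to $1$, flux $f(u)=u^2/2$), whose traveling waves $(\bar u,\bar z)(x-t)$ with $\bar y=\bar z'$ satisfy the displayed ODE system. The ignition function is $\varphi(u)=0$ for $u\le u_{\mathrm{ig}}$ and $\varphi(u)=e^{-E_A/(u-u_{\mathrm{ig}})}$ for $u>u_{\mathrm{ig}}$, with activation energy $E_A>0$ and fixed ignition threshold $u_{\mathrm{ig}}$. A weak detonation is such a connection with $f'(u_\pm)=u_\pm<s=1$. *)

theory Defs
  imports "HOL-Analysis.Analysis"
begin

definition ign :: "real \<Rightarrow> real \<Rightarrow> real \<Rightarrow> real" where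
  "ign EA uig u = (if u \<le> uig then 0 else exp (- EA / (u - uig)))"

end

theory Submission
  imports Defs
begin

lemma crossing_lemma:
  fixes f f' :: "real \<Rightarrow> real" and L c :: real
  assumes der: "\<And>x. (f has_real_derivative f' x) (at x)"
    and lim: "(f \<longlongrightarrow> L) at_bot" and Lc: "L < c"
    and neg: "\<And>p. f p = c \<Longrightarrow> f' p < 0"
  shows "f xa < c"
proof (rule ccontr)
  assume "\<not> f xa < c"
  hence ge: "c \<le> f xa" by simp
  have cont: "continuous_on UNIV f"
    using der by (meson DERIV_isCont continuous_at_imp_continuous_on)
  have "eventually (\<lambda>s. f s < c) at_bot"
    using order_tendstoD(2)[OF lim Lc] .
  then obtain N where N: "\<And>s. s \<le> N \<Longrightarrow> f s < c"
    by (auto simp: eventually_at_bot_linorder)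
  define s1 where "s1 = min N (xa - 1)"
  have s1: "s1 < xa" "f s1 < c" using N by (auto simp: s1_def)
  define A where "A = {s1..xa} \<inter> {x. c \<le> f x}"
  have "closed {x. (\<lambda>_. c) x \<le> f x}"
    by (rule closed_Collect_le) (auto intro: cont)
  hence clA: "closed A" unfolding A_def by (intro closed_Int) auto
  have "xa \<in> A" using ge s1 unfolding A_def by auto
  hence neA: "A \<noteq> {}" by blast
  have bdA: "bdd_below A" unfolding A_def by auto
  define p where "p = Inf A"
  have pA: "p \<in> A" unfolding p_def by (rule closed_contains_Inf[OF neA bdA clA])
  hence p1: "s1 \<le> p" "p \<le> xa" "c \<le> f p" unfolding A_def by auto
  have ps1: "s1 < p" using p1 s1 by (cases "p = s1") auto
  have below: "f s < c" if "s1 \<le> s" "s < p" for s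
  proof (rule ccontr)
    assume "\<not> f s < c"
    hence "s \<in> A" using that p1 unfolding A_def by auto
    hence "p \<le> s" unfolding p_def using bdA by (rule cInf_lower)
    thus False using that by simp
  qed
  have "f p \<le> c"
  proof (rule tendsto_upperbound)
    show "(f \<longlongrightarrow> f p) (at_left p)"
      using cont by (meson DERIV_isCont der isCont_def filterlim_at_split)
    show "eventually (\<lambda>s. f s \<le> c) (at_left p)"
      using eventually_at_left_real[OF ps1] by eventually_elim (auto intro: less_imp_le below)
  qed (simp add: trivial_limit_at_left_real)
  hence fp: "f p = c" using p1 by simp
  obtain d where d: "d > 0" "\<And>h. h > 0 \<Longrightarrow> h < d \<Longrightarrow> f p < f (p - h)"
    using DERIV_neg_dec_left[OF der neg[OF fp]] by blast
  define h where "h = min (d/2) (p - s1)"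
  have "h > 0" "h < d" using d ps1 by (auto simp: h_def)
  hence "f p < f (p - h)" using d by blast
  moreover have "f (p - h) < c" using below[of "p - h"] \<open>h > 0\<close> by (auto simp: h_def)
  ultimately show False using fp by simp
qed

theorem proposition2p3:
  fixes q k D EA uig um up :: real
    and u z y :: "real \<Rightarrow> real"
  assumes q_pos: "q > 0" and k_pos: "k > 0" and D_pos: "D > 0" and EA_pos: "EA > 0"
    and du: "\<And>\<xi>. (u has_real_derivative
              ((u \<xi>)\<^sup>2 / 2 - um\<^sup>2 / 2 - (u \<xi> - um) - q * (z \<xi> + D * y \<xi>))) (at \<xi>)"
    and dz: "\<And>\<xi>. (z has_real_derivative y \<xi>) (at \<xi>)"
    and dy: "\<And>\<xi>. (y has_real_derivative ((- y \<xi> + k * ign EA uig (u \<xi>) * z \<xi>) / D)) (at \<xi>)"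
    and z_nonneg: "\<And>\<xi>. z \<xi> \<ge> 0"
    and lim_u_m: "(u \<longlongrightarrow> um) at_bot" and lim_z_m: "(z \<longlongrightarrow> 0) at_bot"
    and lim_y_m: "(y \<longlongrightarrow> 0) at_bot"
    and lim_u_p: "(u \<longlongrightarrow> up) at_top" and lim_z_p: "(z \<longlongrightarrow> 1) at_top"
    and lim_y_p: "(y \<longlongrightarrow> 0) at_top"
    and RH: "(up\<^sup>2 - um\<^sup>2) / 2 = up - um + q"
    and ord: "up < uig" "uig < um"
    and weak: "up < 1" "um < 1"
  shows "(\<forall>\<xi>. u \<xi> \<le> um) \<and> antimono u"
proof -
  define w where "w = (\<lambda>s. z s + D * y s)"
  define phi where "phi = (\<lambda>s. ign EA uig (u s))"
  have phi_nn: "phi s \<ge> 0" for s unfolding phi_def ign_def by auto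
  have dw: "(w has_real_derivative k * phi s * z s) (at s)" for s
  proof -
    have "(w has_real_derivative y s + D * ((- y s + k * ign EA uig (u s) * z s) / D)) (at s)"
      unfolding w_def by (intro DERIV_add dz DERIV_cmult dy)
    thus ?thesis using D_pos by (simp add: phi_def field_simps)
  qed
  have wmono: "w a \<le> w b" if "a \<le> b" for a b
  proof (rule DERIV_nonneg_imp_increasing_open[OF that])
    show "\<exists>y. DERIV w x :> y \<and> 0 \<le> y" for x
      using dw[of x] phi_nn[of x] z_nonneg[of x] k_pos by (intro exI[of _ "k * phi x * z x"]) auto
    show "continuous_on {a..b} w"
      using dw by (meson DERIV_isCont continuous_at_imp_continuous_on)
  qed
  have limw: "(w \<longlongrightarrow> 0) at_bot"
    unfolding w_def using tendsto_add[OF lim_z_m tendsto_mult[OF tendsto_const lim_y_m, of D]] by simp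
  have w_nn: "w s \<ge> 0" for s
  proof (rule tendsto_upperbound[OF limw])
    show "eventually (\<lambda>t. w t \<le> w s) at_bot"
      by (auto simp: eventually_at_bot_linorder intro!: exI[of _ s] wmono)
  qed simp
  define u' where "u' = (\<lambda>s. (u s)\<^sup>2 / 2 - um\<^sup>2 / 2 - (u s - um) - q * (z s + D * y s))"
  have part1: "u s \<le> um" for s
  proof (rule ccontr)
    assume "\<not> u s \<le> um"
    hence us: "u s > um" by simp
    define c where "c = (um + min (u s) (2 - um)) / 2"
    have c: "um < c" "c < u s" "c < 2 - um" using us weak by (auto simp: c_def)
    have hd: "\<And>x. (u has_real_derivative u' x) (at x)" using du by (simp add: u'_def)
    have hn: "\<And>p. u p = c \<Longrightarrow> u' p < 0"
    proof -
      fix p assume up: "u p = c"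
      have eq: "u' p = (c - um) * ((c + um) / 2 - 1) - q * w p"
        unfolding u'_def w_def up by (simp add: power2_eq_square field_simps)
      have "(c - um) * ((c + um) / 2 - 1) < 0"
        using c by (intro mult_pos_neg) auto
      moreover have "q * w p \<ge> 0" using q_pos w_nn[of p] by simp
      ultimately show "u' p < 0" unfolding eq by linarith
    qed
    have "u s < c" using crossing_lemma[where f=u and f'=u' and L=um and c=c and xa=s, OF hd lim_u_m c(1) hn] .
    thus False using c by simp
  qed
  define v' where "v' = (\<lambda>s. (u s - 1) * u' s - q * (k * phi s * z s))"
  have dv: "(u' has_real_derivative v' s) (at s)" for s
  proof -
    have d1: "((\<lambda>s. (u s)\<^sup>2 / 2) has_real_derivative u s * u' s) (at s)"
      using DERIV_cdivide[OF DERIV_power[OF du[of s], of 2], of 2]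
      by (simp add: u'_def mult.commute)
    have d2: "((\<lambda>s. q * w s) has_real_derivative q * (k * phi s * z s)) (at s)"
      by (intro DERIV_cmult dw)
    have d3: "((\<lambda>s. u s - um) has_real_derivative u' s) (at s)"
      using DERIV_diff[OF du[of s] DERIV_const[of um]] by (simp add: u'_def)
    have "((\<lambda>s. (u s)\<^sup>2 / 2 - um\<^sup>2 / 2 - (u s - um) - q * w s) has_real_derivative
       u s * u' s - 0 - u' s - q * (k * phi s * z s)) (at s)"
      by (intro DERIV_diff d1 d2 d3 DERIV_const)
    moreover have "(\<lambda>s. (u s)\<^sup>2 / 2 - um\<^sup>2 / 2 - (u s - um) - q * w s) = u'"
      unfolding u'_def w_def by simp
    moreover have "u s * u' s - 0 - u' s - q * (k * phi s * z s) = v' s"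
      unfolding v'_def by (simp add: algebra_simps)
    ultimately show ?thesis by metis
  qed
  have limv: "(u' \<longlongrightarrow> 0) at_bot"
  proof -
    have "(u' \<longlongrightarrow> um\<^sup>2 / 2 - um\<^sup>2 / 2 - (um - um) - q * (0 + D * 0)) at_bot"
      unfolding u'_def by (intro tendsto_intros lim_u_m lim_z_m lim_y_m) simp_all
    thus ?thesis by simp
  qed
  have vneg: "u' s \<le> 0" for s
  proof (rule ccontr)
    assume "\<not> u' s \<le> 0"
    hence pos: "u' s > 0" by simp
    have hn2: "\<And>p. u' p = u' s \<Longrightarrow> v' p < 0"
    proof -
      fix p assume vp: "u' p = u' s"
      have "(u p - 1) * u' p < 0"
        using part1[of p] weak vp pos by (intro mult_neg_pos) auto
      moreover have "q * (k * phi p * z p) \<ge> 0"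
        using q_pos k_pos phi_nn[of p] z_nonneg[of p] by simp
      ultimately show "v' p < 0" unfolding v'_def by linarith
    qed
    have "u' s < u' s" using crossing_lemma[where f=u' and f'=v' and L=0 and c="u' s" and xa=s, OF dv limv pos hn2] .
    thus False by simp
  qed
  have "antimono u"
  proof (rule antimonoI)
    fix a b :: real assume ab: "a \<le> b"
    show "u b \<le> u a"
    proof (rule DERIV_nonpos_imp_decreasing_open[OF ab])
      show "\<exists>y. DERIV u x :> y \<and> y \<le> 0" for x
        using du[of x] vneg[of x] unfolding u'_def by blast
      show "continuous_on {a..b} u"
        using du by (meson DERIV_isCont continuous_at_imp_continuous_on)
    qed
  qed
  thus ?thesis using part1 by blast
qed

end
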